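(* Let $\mathcal A,\mathcal B,\mathcal C,\mathcal D$ be collections. Suppose there is a map $\phi:(\bigcup\mathcal B)\times\omega\to\bigcup\mathcal A$ such that (1) for all $B\in\mathcal B$ and $n\in\omega$, $\{\phi(y,n):y\in B\}\in\mathcal A$; and (2) whenever $\{\phi(y_n,n):n\in\omega\}\in\mathcal C$ (with $y_n\in\bigcup\mathcal B$), then $\{y_n:n\in\omega\}\in\mathcal D$. Then $G_1(\mathcal A,\mathcal C)\le_{\mathrm{II}}G_1(\mathcal B,\mathcal D)$.
   Context: In $G_1(\mathcal E,\mathcal F)$, at each inning $n\in\omega$ One plays $E_n\in\mathcal E$ and Two picks $x_n\in E_n$; Two wins iff $\{x_n:n\in\omega\}\in\mathcal F$. A strategy for One maps finite sequences of Two's moves to moves; predetermined if it depends only on the inning number. A strategy for Two maps finite sequences of One's moves to an element of the last one; Markov if it depends only on One's last move and the inning number. $G\le_{\mathrm{II}}H$ means: (1) a winning Markov strategy for Two in $G$ implies one in $H$; (2) a winning strategy for Two in $G$ implies one in $H$; (3) if One has no winning strategy in $G$ then One has none in $H$; (4) if One has no winning predetermined strategy in $G$ then One has none in $H$. *)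

theory Defs
  imports Main
begin

text \<open>The selection game G_1(E,F). One's moves are elements of E (sets of 'a),
Two's moves are elements of 'a. Innings are indexed by nat (omega).\<close>

definition one_strategy :: "'a set set \<Rightarrow> ('a list \<Rightarrow> 'a set) \<Rightarrow> bool" where
  "one_strategy E \<sigma> \<longleftrightarrow> (\<forall>s. \<sigma> s \<in> E)"

definition one_predetermined :: "('a list \<Rightarrow> 'a set) \<Rightarrow> bool" where
  "one_predetermined \<sigma> \<longleftrightarrow> (\<forall>s t. length s = length t \<longrightarrow> \<sigma> s = \<sigma> t)"

definition one_winning :: "'a set set \<Rightarrow> 'a set set \<Rightarrow> ('a list \<Rightarrow> 'a set) \<Rightarrow> bool" where
  "one_winning E F \<sigma> \<longleftrightarrow>
     one_strategy E \<sigma> \<and>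
     (\<forall>x :: nat \<Rightarrow> 'a. (\<forall>n. x n \<in> \<sigma> (map x [0..<n])) \<longrightarrow> range x \<notin> F)"

definition two_strategy :: "'a set set \<Rightarrow> ('a set list \<Rightarrow> 'a) \<Rightarrow> bool" where
  "two_strategy E \<tau> \<longleftrightarrow>
     (\<forall>s. s \<noteq> [] \<longrightarrow> set s \<subseteq> E \<longrightarrow> \<tau> s \<in> last s)"

definition two_markov :: "('a set list \<Rightarrow> 'a) \<Rightarrow> bool" where
  "two_markov \<tau> \<longleftrightarrow>
     (\<forall>s t. s \<noteq> [] \<longrightarrow> t \<noteq> [] \<longrightarrow> length s = length t \<longrightarrow> last s = last t
        \<longrightarrow> \<tau> s = \<tau> t)"

definition two_winning :: "'a set set \<Rightarrow> 'a set set \<Rightarrow> ('a set list \<Rightarrow> 'a) \<Rightarrow> bool" where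
  "two_winning E F \<tau> \<longleftrightarrow>
     two_strategy E \<tau> \<and>
     (\<forall>A :: nat \<Rightarrow> 'a set. (\<forall>n. A n \<in> E) \<longrightarrow>
        range (\<lambda>n. \<tau> (map A [0..<Suc n])) \<in> F)"

definition II_markov_wins :: "'a set set \<Rightarrow> 'a set set \<Rightarrow> bool" where
  "II_markov_wins E F \<longleftrightarrow> (\<exists>\<tau>. two_markov \<tau> \<and> two_winning E F \<tau>)"

definition II_wins :: "'a set set \<Rightarrow> 'a set set \<Rightarrow> bool" where
  "II_wins E F \<longleftrightarrow> (\<exists>\<tau>. two_winning E F \<tau>)"

definition I_wins :: "'a set set \<Rightarrow> 'a set set \<Rightarrow> bool" where
  "I_wins E F \<longleftrightarrow> (\<exists>\<sigma>. one_winning E F \<sigma>)"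

definition I_pre_wins :: "'a set set \<Rightarrow> 'a set set \<Rightarrow> bool" where
  "I_pre_wins E F \<longleftrightarrow> (\<exists>\<sigma>. one_predetermined \<sigma> \<and> one_winning E F \<sigma>)"

definition G1_le_II :: "'a set set \<Rightarrow> 'a set set \<Rightarrow> 'b set set \<Rightarrow> 'b set set \<Rightarrow> bool" where
  "G1_le_II A C B D \<longleftrightarrow>
     (II_markov_wins A C \<longrightarrow> II_markov_wins B D) \<and>
     (II_wins A C \<longrightarrow> II_wins B D) \<and>
     (\<not> I_wins A C \<longrightarrow> \<not> I_wins B D) \<and>
     (\<not> I_pre_wins A C \<longrightarrow> \<not> I_pre_wins B D)"

end

theory Submission
  imports Defs
begin

fun pull :: "('b list \<Rightarrow> 'b set) \<Rightarrow> ('b \<Rightarrow> nat \<Rightarrow> 'a) \<Rightarrow> 'a list \<Rightarrow> 'b list" where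
  "pull \<sigma> \<phi> [] = []"
| "pull \<sigma> \<phi> (x#xs) = (SOME y. y \<in> \<sigma> (rev (pull \<sigma> \<phi> xs)) \<and> \<phi> y (length xs) = x) # pull \<sigma> \<phi> xs"

lemma pull_len: "length (pull \<sigma> \<phi> xs) = length xs"
  by (induction xs) auto

lemma part3:
  assumes h1: "\<forall>B\<in>\<B>. \<forall>n. (\<lambda>y. \<phi> y n) ` B \<in> \<A>"
    and h2: "\<forall>y :: nat \<Rightarrow> 'b. (\<forall>n. y n \<in> \<Union>\<B>) \<longrightarrow>
               range (\<lambda>n. \<phi> (y n) n) \<in> \<C> \<longrightarrow> range y \<in> \<D>"
    and w: "one_winning \<B> \<D> \<sigma>"
  shows "one_winning \<A> \<C> (\<lambda>xs. (\<lambda>y. \<phi> y (length xs)) ` \<sigma> (rev (pull \<sigma> \<phi> (rev xs))))"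
proof -
  have st: "\<And>s. \<sigma> s \<in> \<B>" using w unfolding one_winning_def one_strategy_def by blast
  have wn: "\<And>y. (\<forall>n. y n \<in> \<sigma> (map y [0..<n])) \<Longrightarrow> range y \<notin> \<D>"
    using w unfolding one_winning_def by blast
  show ?thesis unfolding one_winning_def one_strategy_def
  proof (intro conjI allI impI)
    fix s show "(\<lambda>y. \<phi> y (length s)) ` \<sigma> (rev (pull \<sigma> \<phi> (rev s))) \<in> \<A>"
      using h1 st by blast
  next
    fix x :: "nat \<Rightarrow> 'a"
    assume hx: "\<forall>n. x n \<in> (\<lambda>y. \<phi> y (length (map x [0..<n]))) ` \<sigma> (rev (pull \<sigma> \<phi> (rev (map x [0..<n]))))"
    define yy where "yy n = hd (pull \<sigma> \<phi> (rev (map x [0..<Suc n])))" for n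
    have yyeq: "yy n = (SOME y. y \<in> \<sigma> (rev (pull \<sigma> \<phi> (rev (map x [0..<n])))) \<and> \<phi> y n = x n)" for n
      by (simp add: yy_def)
    have pre: "rev (pull \<sigma> \<phi> (rev (map x [0..<n]))) = map yy [0..<n]" for n
    proof (induction n)
      case 0 then show ?case by simp
    next
      case (Suc n)
      have "rev (pull \<sigma> \<phi> (rev (map x [0..<Suc n]))) = rev (pull \<sigma> \<phi> (rev (map x [0..<n]))) @ [yy n]"
        by (simp add: yyeq)
      then show ?case using Suc by simp
    qed
    have yprop: "yy n \<in> \<sigma> (map yy [0..<n]) \<and> \<phi> (yy n) n = x n" for n
    proof -
      have "\<exists>y. y \<in> \<sigma> (rev (pull \<sigma> \<phi> (rev (map x [0..<n])))) \<and> \<phi> y n = x n"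
        using hx[rule_format, of n] by auto
      then have "yy n \<in> \<sigma> (rev (pull \<sigma> \<phi> (rev (map x [0..<n])))) \<and> \<phi> (yy n) n = x n"
        unfolding yyeq by (rule someI_ex)
      then show ?thesis using pre by simp
    qed
    have "range yy \<notin> \<D>" using wn yprop by blast
    moreover have "\<forall>n. yy n \<in> \<Union>\<B>" using yprop st by blast
    moreover have "range (\<lambda>n. \<phi> (yy n) n) = range x" using yprop by simp
    ultimately show "range x \<notin> \<C>" using h2 by metis
  qed
qed

lemma part4:
  assumes "one_predetermined \<sigma>"
  shows "one_predetermined (\<lambda>xs. (\<lambda>y. \<phi> y (length xs)) ` \<sigma> (rev (pull \<sigma> \<phi> (rev xs))))"
  using assms unfolding one_predetermined_def
  by (metis length_rev pull_len)

definition imgs :: "('b \<Rightarrow> nat \<Rightarrow> 'a) \<Rightarrow> 'b set list \<Rightarrow> 'a set list" where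
  "imgs \<phi> s = map (\<lambda>k. (\<lambda>y. \<phi> y k) ` (s!k)) [0..<length s]"

definition push :: "('a set list \<Rightarrow> 'a) \<Rightarrow> ('b \<Rightarrow> nat \<Rightarrow> 'a) \<Rightarrow> 'b set list \<Rightarrow> 'b" where
  "push \<tau> \<phi> s = (SOME y. y \<in> last s \<and> \<phi> y (length s - 1) = \<tau> (imgs \<phi> s))"

lemma imgs_map: "imgs \<phi> (map B [0..<n]) = map (\<lambda>k. (\<lambda>y. \<phi> y k) ` B k) [0..<n]"
  unfolding imgs_def by (rule nth_equalityI) auto

lemma imgs_last: "s \<noteq> [] \<Longrightarrow> last (imgs \<phi> s) = (\<lambda>y. \<phi> y (length s - 1)) ` last s"
  unfolding imgs_def by (simp add: last_map last_conv_nth)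

lemma push_markov: "two_markov \<tau> \<Longrightarrow> two_markov (push \<tau> \<phi>)"
  unfolding two_markov_def push_def
proof (intro allI impI)
  fix s t :: "'b set list"
  assume m: "\<forall>s t. s \<noteq> [] \<longrightarrow> t \<noteq> [] \<longrightarrow> length s = length t \<longrightarrow> last s = last t \<longrightarrow> \<tau> s = \<tau> t"
    and a: "s \<noteq> []" "t \<noteq> []" "length s = length t" "last s = last t"
  have "imgs \<phi> s \<noteq> []" "imgs \<phi> t \<noteq> []" using a by (auto simp: imgs_def)
  moreover have "length (imgs \<phi> s) = length (imgs \<phi> t)" using a by (simp add: imgs_def)
  moreover have "last (imgs \<phi> s) = last (imgs \<phi> t)" using a by (simp add: imgs_last)
  ultimately have "\<tau> (imgs \<phi> s) = \<tau> (imgs \<phi> t)" using m by blast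
  then show "(SOME y. y \<in> last s \<and> \<phi> y (length s - 1) = \<tau> (imgs \<phi> s)) =
       (SOME y. y \<in> last t \<and> \<phi> y (length t - 1) = \<tau> (imgs \<phi> t))" using a by simp
qed

lemma push_win:
  assumes h1: "\<forall>B\<in>\<B>. \<forall>n. (\<lambda>y. \<phi> y n) ` B \<in> \<A>"
    and h2: "\<forall>y :: nat \<Rightarrow> 'b. (\<forall>n. y n \<in> \<Union>\<B>) \<longrightarrow>
               range (\<lambda>n. \<phi> (y n) n) \<in> \<C> \<longrightarrow> range y \<in> \<D>"
    and w: "two_winning \<A> \<C> \<tau>"
  shows "two_winning \<B> \<D> (push \<tau> \<phi>)"
proof -
  have st: "\<And>s. s \<noteq> [] \<Longrightarrow> set s \<subseteq> \<A> \<Longrightarrow> \<tau> s \<in> last s"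
    using w unfolding two_winning_def two_strategy_def by blast
  have pw: "push \<tau> \<phi> s \<in> last s \<and> \<phi> (push \<tau> \<phi> s) (length s - 1) = \<tau> (imgs \<phi> s)"
    if "s \<noteq> []" "set s \<subseteq> \<B>" for s
  proof -
    have "set (imgs \<phi> s) \<subseteq> \<A>" using that h1 by (auto simp: imgs_def dest!: nth_mem)
    moreover have "imgs \<phi> s \<noteq> []" using that by (simp add: imgs_def)
    ultimately have "\<tau> (imgs \<phi> s) \<in> (\<lambda>y. \<phi> y (length s - 1)) ` last s"
      using st imgs_last[OF that(1)] by metis
    then have "\<exists>y. y \<in> last s \<and> \<phi> y (length s - 1) = \<tau> (imgs \<phi> s)" by auto
    then show ?thesis unfolding push_def by (rule someI_ex)
  qed
  show ?thesis unfolding two_winning_def two_strategy_def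
  proof (intro conjI allI impI)
    fix s :: "'b set list" assume "s \<noteq> []" "set s \<subseteq> \<B>"
    then show "push \<tau> \<phi> s \<in> last s" using pw by blast
  next
    fix B :: "nat \<Rightarrow> 'b set" assume hB: "\<forall>n. B n \<in> \<B>"
    define A where "A n = (\<lambda>y. \<phi> y n) ` B n" for n
    have "\<forall>n. A n \<in> \<A>" using hB h1 by (simp add: A_def)
    then have C: "range (\<lambda>n. \<tau> (map A [0..<Suc n])) \<in> \<C>"
      using w unfolding two_winning_def by blast
    define yy where "yy n = push \<tau> \<phi> (map B [0..<Suc n])" for n
    have P: "yy n \<in> B n \<and> \<phi> (yy n) n = \<tau> (map A [0..<Suc n])" for n
    proof -
      have "map B [0..<Suc n] \<noteq> []" "set (map B [0..<Suc n]) \<subseteq> \<B>" using hB by auto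
      from pw[OF this] show ?thesis
        by (simp add: yy_def imgs_map A_def[abs_def] last_map del: upt_Suc)
    qed
    have "\<forall>n. yy n \<in> \<Union>\<B>" using P hB by blast
    moreover have "range (\<lambda>n. \<phi> (yy n) n) \<in> \<C>" using P C by simp
    ultimately have "range yy \<in> \<D>" using h2 by blast
    then show "range (\<lambda>n. push \<tau> \<phi> (map B [0..<Suc n])) \<in> \<D>" by (simp add: yy_def)
  qed
qed

theorem mainTheorem8:
  fixes \<A> \<C> :: "'a set set" and \<B> \<D> :: "'b set set"
    and \<phi> :: "'b \<Rightarrow> nat \<Rightarrow> 'a"
  assumes maps: "\<forall>y\<in>\<Union>\<B>. \<forall>n. \<phi> y n \<in> \<Union>\<A>"
    and h1: "\<forall>B\<in>\<B>. \<forall>n. (\<lambda>y. \<phi> y n) ` B \<in> \<A>"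
    and h2: "\<forall>y :: nat \<Rightarrow> 'b. (\<forall>n. y n \<in> \<Union>\<B>) \<longrightarrow>
               range (\<lambda>n. \<phi> (y n) n) \<in> \<C> \<longrightarrow> range y \<in> \<D>"
  shows "G1_le_II \<A> \<C> \<B> \<D>"
  unfolding G1_le_II_def II_markov_wins_def II_wins_def I_wins_def I_pre_wins_def
  using push_win[OF h1 h2] push_markov part3[OF h1 h2] part4 by blast

end
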